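(* Let $\mathbf{B}\in\dot{\mathbb{P}}(\mathbb{L}(\mathbf{C}))$. Then $\mathbf{B}$ is singular for $\mathcal{D}(\mathbf{C},\Omega)$ if and only if there exists $\omega^*\in\Omega$ such that in every sufficient cause representation $(\mathbf{A},\mathfrak{B})$ for $\mathcal{D}(\mathbf{C},\Omega)$: (i) for every $\mathbf{B}^*\in\dot{\mathbb{P}}(\mathbb{L}(\mathbf{C}))$ with $|\mathbf{B}^*|=|\mathbf{C}|$ and $\mathbf{B}\subseteq\mathbf{B}^*$ there exists $\mathbf{B}_i\in\mathfrak{B}$ with $\mathbf{B}_i\subseteq\mathbf{B}^*$ and $A_i(\omega^* )=1$; and (ii) for every $\mathbf{B}_i\in\mathfrak{B}$ with $\mathbf{B}\not\subseteq\mathbf{B}_i$, $A_i(\omega^* )=0$.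
   Context: Events are binary random variables on a population $\Omega$; $\overline{X}=1-X$; $\mathbb{L}(\mathbf{C})=\mathbf{C}\cup\{\overline{X}:X\in\mathbf{C}\}$; $\dot{\mathbb{P}}(\mathbb{L}(\mathbf{C}))$ is the set of subsets of $\mathbb{L}(\mathbf{C})$ not containing both $X$ and $\overline{X}$; $(L)_{\mathbf{c}}$ is the value of literal $L$ under assignment $\mathbf{c}$; $\bigwedge(\mathbf{B})=\min_{L\in\mathbf{B}}L$. Potential outcomes $\mathcal{D}(\mathbf{C},\Omega)$: $D_{\mathbf{c}}(\omega)\in\{0,1\}$. $\mathbf{B}$ is a sufficient cause for $D$ relative to $\mathbf{C}$ for $\omega^*$ if some $\mathbf{c}^*$ has $(\bigwedge(\mathbf{B}))_{\mathbf{c}^*}=1$ and $D_{\mathbf{c}}(\omega^* )=1$ whenever $(\bigwedge(\mathbf{B}))_{\mathbf{c}}=1$; minimal if no proper subset is such; singular for $\omega^*$ if it is a minimal sufficient cause for $\omega^*$ and no other $\mathbf{B}'\in\dot{\mathbb{P}}(\mathbb{L}(\mathbf{C}))$ is a minimal sufficient cause for $\omega^*$; singular for $\mathcal{D}(\mathbf{C},\Omega)$ if singular for some $\omega^*\in\Omega$. A sufficient cause representation $(\mathbf{A},\mathfrak{B})$ for $\mathcal{D}(\mathbf{C},\Omega)$: binary random variables $\mathbf{A}=\langle A_1,\dots,A_p\rangle$ on $\Omega$ unaffected by interventions on $\mathbf{C}$, paired with $\mathfrak{B}=\langle\mathbf{B}_1,\dots,\mathbf{B}_p\rangle$, $\mathbf{B}_i\in\dot{\mathbb{P}}(\mathbb{L}(\mathbf{C}))$,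 such that $D_{\mathbf{c}}(\omega)=1$ iff some $j$ has $A_j(\omega)=1$ and $(\bigwedge(\mathbf{B}_j))_{\mathbf{c}}=1$. *)

theory Defs
  imports Main "HOL-Library.FuncSet"
begin

text \<open>Events in C are named by elements of type 'v. A literal is a pair (X, b):
  (X, True) stands for X, (X, False) stands for its complement 1 - X.\<close>

type_synonym 'v literal = "'v \<times> bool"

definition lits :: "'v set \<Rightarrow> 'v literal set" where
  "lits C = C \<times> (UNIV :: bool set)"

definition compl_lit :: "'v literal \<Rightarrow> 'v literal" where
  "compl_lit L = (fst L, \<not> snd L)"

definition consistent_subsets :: "'v set \<Rightarrow> 'v literal set set" where
  "consistent_subsets C = {B. B \<subseteq> lits C \<and> (\<forall>L\<in>B. compl_lit L \<notin> B)}"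

definition assignments :: "'v set \<Rightarrow> ('v \<Rightarrow> bool) set" where
  "assignments C = (C \<rightarrow>\<^sub>E (UNIV :: bool set))"

definition lit_val :: "'v literal \<Rightarrow> ('v \<Rightarrow> bool) \<Rightarrow> bool" where
  "lit_val L c = (c (fst L) = snd L)"

definition conj_val :: "'v literal set \<Rightarrow> ('v \<Rightarrow> bool) \<Rightarrow> bool" where
  "conj_val B c = (\<forall>L\<in>B. lit_val L c)"

text \<open>Potential outcomes D c \<omega> (D_c(\<omega>)).\<close>
definition sufficient_cause ::
  "'v set \<Rightarrow> (('v \<Rightarrow> bool) \<Rightarrow> 'w \<Rightarrow> bool) \<Rightarrow> 'v literal set \<Rightarrow> 'w \<Rightarrow> bool" where
  "sufficient_cause C D B \<omega> \<longleftrightarrow>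
     (\<exists>c\<in>assignments C. conj_val B c) \<and>
     (\<forall>c\<in>assignments C. conj_val B c \<longrightarrow> D c \<omega>)"

definition minimal_sufficient_cause ::
  "'v set \<Rightarrow> (('v \<Rightarrow> bool) \<Rightarrow> 'w \<Rightarrow> bool) \<Rightarrow> 'v literal set \<Rightarrow> 'w \<Rightarrow> bool" where
  "minimal_sufficient_cause C D B \<omega> \<longleftrightarrow>
     sufficient_cause C D B \<omega> \<and> (\<forall>B'. B' \<subset> B \<longrightarrow> \<not> sufficient_cause C D B' \<omega>)"

definition singular_for ::
  "'v set \<Rightarrow> (('v \<Rightarrow> bool) \<Rightarrow> 'w \<Rightarrow> bool) \<Rightarrow> 'v literal set \<Rightarrow> 'w \<Rightarrow> bool" where
  "singular_for C D B \<omega> \<longleftrightarrow>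
     minimal_sufficient_cause C D B \<omega> \<and>
     (\<forall>B'\<in>consistent_subsets C. B' \<noteq> B \<longrightarrow> \<not> minimal_sufficient_cause C D B' \<omega>)"

definition singular ::
  "'v set \<Rightarrow> 'w set \<Rightarrow> (('v \<Rightarrow> bool) \<Rightarrow> 'w \<Rightarrow> bool) \<Rightarrow> 'v literal set \<Rightarrow> bool" where
  "singular C \<Omega> D B \<longleftrightarrow> (\<exists>\<omega>\<in>\<Omega>. singular_for C D B \<omega>)"

text \<open>Sufficient cause representation (A, frak B) with p components, indexed by i < p.
  The A_i are functions of \<omega> only, hence unaffected by interventions on C.\<close>
definition sc_representation ::
  "'v set \<Rightarrow> 'w set \<Rightarrow> (('v \<Rightarrow> bool) \<Rightarrow> 'w \<Rightarrow> bool) \<Rightarrow>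
   nat \<Rightarrow> (nat \<Rightarrow> 'w \<Rightarrow> bool) \<Rightarrow> (nat \<Rightarrow> 'v literal set) \<Rightarrow> bool" where
  "sc_representation C \<Omega> D p A Bs \<longleftrightarrow>
     (\<forall>i<p. Bs i \<in> consistent_subsets C) \<and>
     (\<forall>c\<in>assignments C. \<forall>\<omega>\<in>\<Omega>.
        D c \<omega> \<longleftrightarrow> (\<exists>j<p. A j \<omega> \<and> conj_val (Bs j) c))"

end

theory Submission
  imports Defs
begin

definition Fc :: "'v set \<Rightarrow> ('v \<Rightarrow> bool) \<Rightarrow> 'v literal set" where
  "Fc C c = (\<lambda>X. (X, c X)) ` C"

definition cof :: "'v set \<Rightarrow> 'v literal set \<Rightarrow> ('v \<Rightarrow> bool) \<Rightarrow> 'v \<Rightarrow> bool" where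
  "cof C Bs d X = (if X \<in> C then (if (X,True) \<in> Bs then True else if (X,False) \<in> Bs then False else d X) else undefined)"

lemma cof_assign: "cof C Bs d \<in> assignments C"
  unfolding assignments_def cof_def by auto

lemma cof_sat:
  assumes "Bs \<in> consistent_subsets C"
  shows "conj_val Bs (cof C Bs d)"
  unfolding conj_val_def
proof
  fix L assume L: "L \<in> Bs"
  obtain X b where Lx: "L = (X,b)" by (cases L)
  have X: "X \<in> C" using assms L Lx unfolding consistent_subsets_def lits_def by auto
  have nc: "(X, \<not> b) \<notin> Bs" using assms L Lx unfolding consistent_subsets_def compl_lit_def by fastforce
  show "lit_val L (cof C Bs d)"
    using L Lx X nc unfolding lit_val_def cof_def by (cases b) auto
qed

lemma cof_notL:
  assumes "Bs \<in> consistent_subsets C" "L \<notin> Bs" "L \<in> lits C"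
  shows "\<not> lit_val L (cof C Bs (\<lambda>X. \<not> snd L))"
proof -
  obtain X b where L: "L = (X,b)" by (cases L)
  have "X \<in> C" using assms(3) L unfolding lits_def by auto
  show ?thesis
  proof (cases "(X, \<not> b) \<in> Bs")
    case True
    have "(X,b) \<notin> Bs" using assms(2) L by auto
    then show ?thesis using True L \<open>X\<in>C\<close> unfolding lit_val_def cof_def by (cases b) auto
  next
    case False
    then show ?thesis using assms(2) L \<open>X\<in>C\<close> unfolding lit_val_def cof_def by (cases b) auto
  qed
qed

lemma Fc_cons: "c \<in> assignments C \<Longrightarrow> Fc C c \<in> consistent_subsets C"
  unfolding Fc_def consistent_subsets_def lits_def compl_lit_def by auto

lemma Fc_card: "card (Fc C c) = card C"
  unfolding Fc_def by (rule card_image) (auto simp: inj_on_def)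

lemma conj_Fc:
  assumes "Bs \<in> consistent_subsets C" "c \<in> assignments C"
  shows "conj_val Bs c \<longleftrightarrow> Bs \<subseteq> Fc C c"
proof
  assume h: "conj_val Bs c"
  show "Bs \<subseteq> Fc C c"
  proof
    fix L assume L: "L \<in> Bs"
    then have "fst L \<in> C" using assms(1) unfolding consistent_subsets_def lits_def by auto
    moreover have "c (fst L) = snd L" using h L unfolding conj_val_def lit_val_def by auto
    ultimately have "L = (fst L, c (fst L))" by simp
    then show "L \<in> Fc C c" unfolding Fc_def using \<open>fst L \<in> C\<close> by (rule image_eqI)
  qed
next
  assume "Bs \<subseteq> Fc C c"
  then show "conj_val Bs c" unfolding conj_val_def lit_val_def Fc_def by auto
qed

lemma conj_Fc_self: "c \<in> assignments C \<Longrightarrow> conj_val (Fc C c) c"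
  unfolding conj_val_def lit_val_def Fc_def by auto

lemma conj_Fc_eq:
  assumes "c \<in> assignments C" "c' \<in> assignments C"
  shows "conj_val (Fc C c) c' \<longleftrightarrow> c' = c"
proof
  assume "conj_val (Fc C c) c'"
  then have "\<forall>X\<in>C. c' X = c X" unfolding conj_val_def lit_val_def Fc_def by auto
  moreover have "c' \<in> extensional C" "c \<in> extensional C" using assms unfolding assignments_def by (auto simp: PiE_iff)
  ultimately show "c' = c" by (intro extensionalityI[of c' C c]) auto
qed (auto simp: conj_Fc_self assms)

lemma full_is_Fc:
  assumes "finite C" "Bstar \<in> consistent_subsets C" "card Bstar = card C"
  shows "\<exists>c\<in>assignments C. Bstar = Fc C c"
proof -
  have sub: "Bstar \<subseteq> C \<times> UNIV" and cons: "\<forall>L\<in>Bstar. compl_lit L \<notin> Bstar"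
    using assms(2) unfolding consistent_subsets_def lits_def by auto
  have inj: "inj_on fst Bstar"
  proof (rule inj_onI)
    fix x y assume "x \<in> Bstar" "y \<in> Bstar" "fst x = fst y"
    show "x = y"
    proof (rule ccontr)
      assume ne: "x \<noteq> y"
      have "snd y = (\<not> snd x)" using ne \<open>fst x = fst y\<close> by (cases x; cases y) auto
      then have "compl_lit x = y" unfolding compl_lit_def using \<open>fst x = fst y\<close> by (cases y) auto
      then show False using cons \<open>x \<in> Bstar\<close> \<open>y \<in> Bstar\<close> by metis
    qed
  qed
  have fin: "finite Bstar" using sub assms(1) finite_subset[OF sub] by simp
  have "fst ` Bstar \<subseteq> C" using sub by auto
  moreover have "card (fst ` Bstar) = card C" using card_image[OF inj] assms(3) by simp
  ultimately have img: "fst ` Bstar = C" using assms(1) by (simp add: card_subset_eq)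
  define c where "c X = (if X \<in> C then (X,True) \<in> Bstar else undefined)" for X
  have ca: "c \<in> assignments C" unfolding assignments_def c_def by auto
  have "Bstar = Fc C c"
  proof
    show "Bstar \<subseteq> Fc C c"
    proof
      fix L assume L: "L \<in> Bstar"
      obtain X b where Lx: "L = (X,b)" by (cases L)
      have X: "X \<in> C" using sub L Lx by auto
      have "c X = b"
      proof (cases b)
        case True then show ?thesis using L Lx X c_def by auto
      next
        case False
        have "compl_lit L \<notin> Bstar" using cons L by blast
        then have "(X,True) \<notin> Bstar" using Lx False unfolding compl_lit_def by simp
        then show ?thesis using X c_def False by simp
      qed
      then show "L \<in> Fc C c" using Lx X unfolding Fc_def by auto
    qed
  next
    show "Fc C c \<subseteq> Bstar"
    proof
      fix L assume "L \<in> Fc C c"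
      then obtain X where X: "X \<in> C" and L: "L = (X, c X)" unfolding Fc_def by auto
      obtain b where b: "(X,b) \<in> Bstar" using img X by force
      show "L \<in> Bstar"
      proof (cases b)
        case True then show ?thesis using b L X c_def by auto
      next
        case False
        have "compl_lit (X,b) \<notin> Bstar" using cons b by blast
        then have "(X,True) \<notin> Bstar" using False unfolding compl_lit_def by simp
        then show ?thesis using b L X c_def False by auto
      qed
    qed
  qed
  then show ?thesis using ca by blast
qed


lemma Fc_suff: "c \<in> assignments C \<Longrightarrow> D c \<omega> \<Longrightarrow> sufficient_cause C D (Fc C c) \<omega>"
  unfolding sufficient_cause_def using conj_Fc_eq conj_Fc_self by blast

lemma sing_char:
  assumes fin: "finite C" and B: "B \<in> consistent_subsets C"
  shows "singular_for C D B \<omega> \<longleftrightarrow> (\<forall>c\<in>assignments C. D c \<omega> \<longleftrightarrow> conj_val B c)"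
proof
  assume S: "singular_for C D B \<omega>"
  then have suf: "sufficient_cause C D B \<omega>"
    and oth: "\<forall>B'\<in>consistent_subsets C. B' \<noteq> B \<longrightarrow> \<not> minimal_sufficient_cause C D B' \<omega>"
    unfolding singular_for_def minimal_sufficient_cause_def by auto
  show "\<forall>c\<in>assignments C. D c \<omega> \<longleftrightarrow> conj_val B c"
  proof (intro ballI iffI)
    fix c assume c: "c \<in> assignments C" "conj_val B c"
    then show "D c \<omega>" using suf unfolding sufficient_cause_def by auto
  next
    fix c assume c: "c \<in> assignments C" and Dc: "D c \<omega>"
    show "conj_val B c"
    proof (rule ccontr)
      assume nB: "\<not> conj_val B c"
      let ?P = "\<lambda>B'. B' \<subseteq> Fc C c \<and> sufficient_cause C D B' \<omega>"
      have "?P (Fc C c)" using Fc_suff[of c C D \<omega>] c Dc by auto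
      then obtain B'' where P: "?P B''" and least: "\<forall>y. ?P y \<longrightarrow> card B'' \<le> card y"
        using ex_has_least_nat[of ?P "Fc C c" card] by blast
      have finF: "finite (Fc C c)" unfolding Fc_def using fin by simp
      have cons: "B'' \<in> consistent_subsets C"
        using P Fc_cons[OF c] unfolding consistent_subsets_def by blast
      have min: "minimal_sufficient_cause C D B'' \<omega>"
        unfolding minimal_sufficient_cause_def
      proof (intro conjI allI impI)
        show "sufficient_cause C D B'' \<omega>" using P by auto
      next
        fix B' assume ps: "B' \<subset> B''"
        have sB: "B'' \<subseteq> Fc C c" using P by simp
        have fB: "finite B''" using finite_subset[OF sB finF] .
        have lt: "card B' < card B''" using psubset_card_mono[OF fB ps] .
        have sub: "B' \<subseteq> Fc C c" using ps sB by blast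
        show "\<not> sufficient_cause C D B' \<omega>"
        proof
          assume sc: "sufficient_cause C D B' \<omega>"
          have "card B'' \<le> card B'" using least[rule_format, of B'] sub sc by simp
          then show False using lt by simp
        qed
      qed
      have "conj_val B'' c" using conj_Fc[OF cons c] P by auto
      then have "B'' \<noteq> B" using nB by auto
      then show False using oth cons min by blast
    qed
  qed
next
  assume E: "\<forall>c\<in>assignments C. D c \<omega> \<longleftrightarrow> conj_val B c"
  have Blits: "B \<subseteq> lits C" using B unfolding consistent_subsets_def by auto
  have suf: "sufficient_cause C D B \<omega>"
    unfolding sufficient_cause_def using E cof_assign cof_sat[OF B] by blast
  have key: "\<And>B'. B' \<in> consistent_subsets C \<Longrightarrow> sufficient_cause C D B' \<omega> \<Longrightarrow> B \<subseteq> B'"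
  proof (rule ccontr)
    fix B' assume B': "B' \<in> consistent_subsets C" and sB': "sufficient_cause C D B' \<omega>" and nsub: "\<not> B \<subseteq> B'"
    then obtain L where L: "L \<in> B" "L \<notin> B'" by auto
    let ?c = "cof C B' (\<lambda>X. \<not> snd L)"
    have "conj_val B' ?c" using cof_sat[OF B'] .
    then have "D ?c \<omega>" using sB' cof_assign unfolding sufficient_cause_def by blast
    then have "conj_val B ?c" using E cof_assign by blast
    then have "lit_val L ?c" using L unfolding conj_val_def by auto
    moreover have "\<not> lit_val L ?c" using cof_notL[OF B' L(2)] L(1) Blits by auto
    ultimately show False by simp
  qed
  have min: "minimal_sufficient_cause C D B \<omega>"
    unfolding minimal_sufficient_cause_def
  proof (intro conjI allI impI)
    show "sufficient_cause C D B \<omega>" by (rule suf)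
  next
    fix B' assume ps: "B' \<subset> B"
    have "B' \<in> consistent_subsets C" using ps B unfolding consistent_subsets_def by blast
    then show "\<not> sufficient_cause C D B' \<omega>" using key ps by blast
  qed
  show "singular_for C D B \<omega>"
    unfolding singular_for_def
  proof (intro conjI ballI impI)
    show "minimal_sufficient_cause C D B \<omega>" by (rule min)
  next
    fix B' assume B': "B' \<in> consistent_subsets C" and ne: "B' \<noteq> B"
    show "\<not> minimal_sufficient_cause C D B' \<omega>"
    proof
      assume m: "minimal_sufficient_cause C D B' \<omega>"
      then have "B \<subseteq> B'" using key B' unfolding minimal_sufficient_cause_def by blast
      then have "B \<subset> B'" using ne by auto
      then show False using m suf unfolding minimal_sufficient_cause_def by blast
    qed
  qed
qed


theorem mainTheorem14:
  fixes C :: "'v set" and \<Omega> :: "'w set"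
    and D :: "('v \<Rightarrow> bool) \<Rightarrow> 'w \<Rightarrow> bool" and B :: "'v literal set"
  assumes "finite C"
    and "B \<in> consistent_subsets C"
  shows "singular C \<Omega> D B \<longleftrightarrow>
    (\<exists>\<omega>\<in>\<Omega>. \<forall>p A Bs. sc_representation C \<Omega> D p A Bs \<longrightarrow>
        (\<forall>Bstar\<in>consistent_subsets C. card Bstar = card C \<and> B \<subseteq> Bstar \<longrightarrow>
            (\<exists>i<p. Bs i \<subseteq> Bstar \<and> A i \<omega>)) \<and>
        (\<forall>i<p. \<not> B \<subseteq> Bs i \<longrightarrow> \<not> A i \<omega>))"
proof
  assume "singular C \<Omega> D B"
  then obtain \<omega> where w: "\<omega> \<in> \<Omega>" and S: "singular_for C D B \<omega>" unfolding singular_def by blast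
  have E: "\<forall>c\<in>assignments C. D c \<omega> \<longleftrightarrow> conj_val B c" using S sing_char[OF assms, of D \<omega>] by simp
  have Blits: "B \<subseteq> lits C" using assms(2) unfolding consistent_subsets_def by auto
  show "\<exists>\<omega>\<in>\<Omega>. \<forall>p A Bs. sc_representation C \<Omega> D p A Bs \<longrightarrow>
        (\<forall>Bstar\<in>consistent_subsets C. card Bstar = card C \<and> B \<subseteq> Bstar \<longrightarrow>
            (\<exists>i<p. Bs i \<subseteq> Bstar \<and> A i \<omega>)) \<and>
        (\<forall>i<p. \<not> B \<subseteq> Bs i \<longrightarrow> \<not> A i \<omega>)"
  proof (intro bexI[OF _ w] allI impI conjI ballI)
    fix p A Bs assume R: "sc_representation C \<Omega> D p A Bs"
    have Bsc: "\<forall>i<p. Bs i \<in> consistent_subsets C" and Rep: "\<forall>c\<in>assignments C. \<forall>\<omega>\<in>\<Omega>.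
        D c \<omega> \<longleftrightarrow> (\<exists>j<p. A j \<omega> \<and> conj_val (Bs j) c)"
      using R unfolding sc_representation_def by auto
    {
      fix Bstar assume Bs: "Bstar \<in> consistent_subsets C" and h: "card Bstar = card C \<and> B \<subseteq> Bstar"
      obtain c where c: "c \<in> assignments C" and eq: "Bstar = Fc C c"
        using full_is_Fc[OF assms(1) Bs] h by blast
      have "conj_val B c" using conj_Fc[OF assms(2) c] h eq by auto
      then have "D c \<omega>" using E[rule_format, OF c] by simp
      then obtain j where j: "j < p" "A j \<omega>" "conj_val (Bs j) c" using Rep[rule_format, OF c w] by blast
      then have "Bs j \<subseteq> Bstar" using conj_Fc[OF Bsc[rule_format, OF j(1)] c] eq by simp
      then show "\<exists>i<p. Bs i \<subseteq> Bstar \<and> A i \<omega>" using j by blast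
    }
    {
      fix i assume i: "i < p" and ns: "\<not> B \<subseteq> Bs i"
      show "\<not> A i \<omega>"
      proof
        assume Ai: "A i \<omega>"
        obtain L where L: "L \<in> B" "L \<notin> Bs i" using ns by auto
        let ?c = "cof C (Bs i) (\<lambda>X. \<not> snd L)"
        have Bi: "Bs i \<in> consistent_subsets C" using Bsc i by auto
        have ca: "?c \<in> assignments C" by (rule cof_assign)
        have "conj_val (Bs i) ?c" using cof_sat[OF Bi] .
        then have "D ?c \<omega>" using Rep[rule_format, OF ca w] i Ai by blast
        then have "conj_val B ?c" using E[rule_format, OF ca] by simp
        then have "lit_val L ?c" using L unfolding conj_val_def by auto
        moreover have "\<not> lit_val L ?c" using cof_notL[OF Bi L(2)] L(1) Blits by auto
        ultimately show False by simp
      qed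
    }
  qed
next
  assume "\<exists>\<omega>\<in>\<Omega>. \<forall>p A Bs. sc_representation C \<Omega> D p A Bs \<longrightarrow>
        (\<forall>Bstar\<in>consistent_subsets C. card Bstar = card C \<and> B \<subseteq> Bstar \<longrightarrow>
            (\<exists>i<p. Bs i \<subseteq> Bstar \<and> A i \<omega>)) \<and>
        (\<forall>i<p. \<not> B \<subseteq> Bs i \<longrightarrow> \<not> A i \<omega>)"
  then obtain \<omega> where w: "\<omega> \<in> \<Omega>" and P: "\<forall>p A Bs. sc_representation C \<Omega> D p A Bs \<longrightarrow>
        (\<forall>Bstar\<in>consistent_subsets C. card Bstar = card C \<and> B \<subseteq> Bstar \<longrightarrow>
            (\<exists>i<p. Bs i \<subseteq> Bstar \<and> A i \<omega>)) \<and>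
        (\<forall>i<p. \<not> B \<subseteq> Bs i \<longrightarrow> \<not> A i \<omega>)" by blast
  let ?M = "assignments C"
  have finM: "finite ?M" unfolding assignments_def using assms(1) by (simp add: finite_PiE)
  obtain h where h: "bij_betw h {0..<card ?M} ?M" using ex_bij_betw_nat_finite[OF finM] by blast
  define p where "p = card ?M"
  define A where "A i w = D (h i) w" for i w
  define Bs where "Bs i = Fc C (h i)" for i
  have hM: "\<And>i. i < p \<Longrightarrow> h i \<in> ?M" using h unfolding p_def bij_betw_def by auto
  have hsurj: "\<And>c. c \<in> ?M \<Longrightarrow> \<exists>i<p. c = h i" using h unfolding p_def bij_betw_def by force
  have R: "sc_representation C \<Omega> D p A Bs"
    unfolding sc_representation_def
  proof (intro conjI allI impI ballI)
    fix i assume "i < p" then show "Bs i \<in> consistent_subsets C" using hM Fc_cons Bs_def by auto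
  next
    fix c w assume c: "c \<in> ?M" and "w \<in> \<Omega>"
    show "D c w \<longleftrightarrow> (\<exists>j<p. A j w \<and> conj_val (Bs j) c)"
    proof
      assume "D c w"
      moreover obtain i where "i < p" "c = h i" using hsurj[OF c] by blast
      ultimately show "\<exists>j<p. A j w \<and> conj_val (Bs j) c"
        using conj_Fc_self[OF c] unfolding A_def Bs_def by blast
    next
      assume "\<exists>j<p. A j w \<and> conj_val (Bs j) c"
      then obtain j where "j < p" "A j w" "conj_val (Bs j) c" by blast
      then show "D c w" using conj_Fc_eq[OF hM c] A_def Bs_def by auto
    qed
  qed
  note PR = P[rule_format, OF R]
  note Pi = PR[THEN conjunct1] and Pii = PR[THEN conjunct2]
  have E: "\<forall>c\<in>assignments C. D c \<omega> \<longleftrightarrow> conj_val B c"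
  proof (intro ballI iffI)
    fix c assume c: "c \<in> ?M" and Dc: "D c \<omega>"
    obtain i where i: "i < p" "c = h i" using hsurj[OF c] by blast
    then have "B \<subseteq> Fc C c" using Pii Dc A_def Bs_def by auto
    then show "conj_val B c" using conj_Fc[OF assms(2) c] by auto
  next
    fix c assume c: "c \<in> ?M" and Bc: "conj_val B c"
    have "B \<subseteq> Fc C c" using conj_Fc[OF assms(2) c] Bc by auto
    then have "\<exists>i<p. Bs i \<subseteq> Fc C c \<and> A i \<omega>"
      using Pi[rule_format, OF Fc_cons[OF c]] Fc_card[of C c] by simp
    then obtain i where i: "i < p" "Fc C (h i) \<subseteq> Fc C c" "D (h i) \<omega>"
      unfolding A_def Bs_def by blast
    have "conj_val (Fc C (h i)) c" using conj_Fc[OF Fc_cons[OF hM[OF i(1)]] c] i(2) by auto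
    then have "c = h i" using conj_Fc_eq[OF hM[OF i(1)] c] by auto
    then show "D c \<omega>" using i by simp
  qed
  then have "singular_for C D B \<omega>" using sing_char[OF assms, of D \<omega>] by simp
  then show "singular C \<Omega> D B" unfolding singular_def using w by blast
qed

end
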